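(* Let $\bar\gamma_M>0$, $\bar\gamma_E>0$ and $0\le\rho<1$, and let $(H_M,H_E)$ be nonnegative random variables with joint density $$f_{H_M,H_E}(h_M,h_E)=\frac{1}{\bar\gamma_M\bar\gamma_E(1-\rho)}\exp\!\left[-\frac{1}{1-\rho}\left(\frac{h_M}{\bar\gamma_M}+\frac{h_E}{\bar\gamma_E}\right)\right]I_0\!\left(\frac{2}{1-\rho}\sqrt{\frac{\rho\,h_M h_E}{\bar\gamma_M\bar\gamma_E}}\right),\qquad h_M,h_E\ge 0,$$ where $I_0(x)=\frac{1}{2\pi}\int_0^{2\pi}e^{x\cos\theta}\,d\theta$, and let $\kappa=\bar\gamma_M/\bar\gamma_E$. For $\bar P>0$ define the secrecy capacity $$C_s(\bar P)=\sup_{P}\ \mathbb{E}\Big[\big(\log(1+H_MP(H_M,H_E))-\log(1+H_EP(H_M,H_E))\big)\mathbf{1}\{H_M>H_E\}\Big],$$ the supremum being over measurable power allocations $P:[0,\infty)^2\to[0,\infty)$ with $\mathbb{E}[P(H_M,H_E)]\le\bar P$. Then, as $\bar P\to\infty$ (i.e. as the SNR grows), $C_s(\bar P)$ converges to the limiting value $$C_s^{\lim}(\kappa,\rho)=\mathbb{E}\!\left[\log\!\frac{H_M}{H_E}\,\mathbf{1}\{H_M>H_E\}\right]=\log(1+\kappa)+\log\!\left(\frac12+\sqrt{\frac14-\frac{\rho\kappa}{(1+\kappa)^2}}\right).$$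
   Context: $H_M$ and $H_E$ are the fading power gains of the main (legitimate) channel and the eavesdropper channel in an ergodic fading wiretap channel with unit-variance Gaussian noise and full channel state information at the transmitter; the given joint density is the correlated (bivariate) Rayleigh model, with exponential marginals of means $\bar\gamma_M,\bar\gamma_E$ and power correlation coefficient $\rho$. $\kappa$ is the average channel gain ratio. The logarithm is taken in a fixed base throughout. *)

theory Defs
  imports "HOL-Probability.Probability"
begin

definition besselI0 :: "real \<Rightarrow> real" where
  "besselI0 x = (1 / (2 * pi)) * integral {0..2 * pi} (\<lambda>\<theta>. exp (x * cos \<theta>))"

definition rayleigh_density :: "real \<Rightarrow> real \<Rightarrow> real \<Rightarrow> real \<times> real \<Rightarrow> real" where
  "rayleigh_density gM gE \<rho> h =
     (if fst h \<ge> 0 \<and> snd h \<ge> 0 then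
        1 / (gM * gE * (1 - \<rho>)) *
        exp (- (1 / (1 - \<rho>)) * (fst h / gM + snd h / gE)) *
        besselI0 (2 / (1 - \<rho>) * sqrt (\<rho> * fst h * snd h / (gM * gE)))
      else 0)"

definition gains_distr :: "real \<Rightarrow> real \<Rightarrow> real \<Rightarrow> (real \<times> real) measure" where
  "gains_distr gM gE \<rho> = density lborel (\<lambda>h. ennreal (rayleigh_density gM gE \<rho> h))"

definition power_allocs :: "real \<Rightarrow> real \<Rightarrow> real \<Rightarrow> real \<Rightarrow> (real \<times> real \<Rightarrow> real) set" where
  "power_allocs gM gE \<rho> Pbar =
     {P. P \<in> borel_measurable borel \<and> (\<forall>h. 0 \<le> P h) \<and>
         (\<integral>\<^sup>+ h. ennreal (P h) \<partial>gains_distr gM gE \<rho>) \<le> ennreal Pbar}"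

text \<open>Ergodic secrecy capacity (logarithm to base b). The integrand is nonnegative a.e.,
  so the expectation is taken as a nonnegative (extended-real) integral.\<close>
definition secrecy_capacity :: "real \<Rightarrow> real \<Rightarrow> real \<Rightarrow> real \<Rightarrow> real \<Rightarrow> ennreal" where
  "secrecy_capacity b gM gE \<rho> Pbar =
     (\<Squnion>P\<in>power_allocs gM gE \<rho> Pbar.
        \<integral>\<^sup>+ h. ennreal ((log b (1 + fst h * P h) - log b (1 + snd h * P h))
                   * indicator {h. fst h > snd h} h) \<partial>gains_distr gM gE \<rho>)"

end

theory Submission
  imports Defs "HOL-Real_Asymp.Real_Asymp"
begin

lemma F1_deriv:
  fixes A B :: real
  assumes A: "A > 0" and B: "0 \<le> B" "B < A"
  defines "s \<equiv> sqrt (A^2 - B^2)"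
  defines "r \<equiv> B / (A + s)"
  shows "((\<lambda>x. (x + 2 * arctan (r * sin x / (1 - r * cos x))) / s) has_real_derivative 1 / (A - B * cos x)) (at x)"
proof -
  have s: "s > 0" "s^2 = A^2 - B^2" using A B by (auto simp: s_def power_strict_mono)
  have rB: "r * B = A - s"
  proof -
    have "(A - s) * (A + s) = B * B" using s by (simp add: algebra_simps power2_eq_square)
    then show ?thesis using s A by (simp add: r_def field_simps)
  qed
  have r0: "0 \<le> r" "r < 1" using s A B by (auto simp: r_def field_simps)
  have c1: "1 - r * cos x > 0"
    using r0 cos_le_one[of x] by (smt (verit) mult_left_le mult_nonneg_nonneg)
  have q: "A - B * cos x > 0"
    using B cos_le_one[of x] by (smt (verit) mult_left_le mult_nonneg_nonneg)
  have key: "(1 - r^2) * (A - B * cos x) = s * (1 - 2 * r * cos x + r^2)"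
  proof -
    have "B = r * (A + s)" using s A by (simp add: r_def)
    then have "(1 - r^2) * (A - B * cos x) - s * (1 - 2 * r * cos x + r^2) = (r*r*(A+s) - (A-s)) * (r*cos x - 1)"
      by (simp add: algebra_simps power2_eq_square)
    moreover have "r*r*(A+s) = A - s" using rB \<open>B = r * (A + s)\<close> by (metis mult.assoc)
    ultimately show ?thesis by simp
  qed
  have E: "((\<lambda>x. x + 2 * arctan (r * sin x / (1 - r * cos x))) has_real_derivative
     (1 - r^2) / (1 - 2 * r * cos x + r^2)) (at x)"
    apply (rule derivative_eq_intros refl)+
    using c1 apply simp
      apply (rule refl)+
  proof -
    have ss: "sin x ^ 2 = 1 - cos x ^ 2" by (simp add: sin_squared_eq)
    have d: "1 + (r * sin x / (1 - r * cos x))\<^sup>2 = (1 - 2 * r * cos x + r^2) / (1 - r * cos x)^2"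
    proof -
      have n0: "(1 - r * cos x)^2 \<noteq> 0" using c1 by simp
      have "1 + (r * sin x / (1 - r * cos x))\<^sup>2 = ((1 - r * cos x)^2 + (r * sin x)^2) / (1 - r * cos x)^2"
        using n0 by (simp add: field_simps power_divide)
      also have "(1 - r * cos x)^2 + (r * sin x)^2 = 1 - 2 * r * cos x + r^2"
        by (simp add: power_mult_distrib ss power2_diff algebra_simps)
      finally show ?thesis .
    qed
    have p: "1 - 2 * r * cos x + r^2 > 0"
    proof -
      have "1 - 2 * r * cos x + r^2 = (1 - r * cos x)^2 + (r * sin x)^2"
        by (simp add: power_mult_distrib ss power2_diff algebra_simps)
      then show ?thesis using c1 by (smt (verit) zero_le_power2 zero_less_power2)
    qed
    have num: "((0 * sin x + cos x * 1 * r) * (1 - r * cos x) - r * sin x * (0 - (0 * cos x + - sin x * 1 * r))) = r * (cos x - r)"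
    proof -
      have sc: "sin x * sin x + cos x * cos x = 1" using sin_cos_squared_add[of x] by (simp add: power2_eq_square)
      show ?thesis using sc by algebra
    qed
    have Q: "(1 - r * cos x) * (1 - r * cos x) = (1 - r * cos x)^2" by (simp add: power2_eq_square)
    show "1 + (0 * arctan (r * sin x / (1 - r * cos x)) + inverse (1 + (r * sin x / (1 - r * cos x))\<^sup>2) *
      (((0 * sin x + cos x * 1 * r) * (1 - r * cos x) - r * sin x * (0 - (0 * cos x + - sin x * 1 * r))) /
     ((1 - r * cos x) * (1 - r * cos x))) * 2) = (1 - r^2) / (1 - 2 * r * cos x + r^2)"
      unfolding d num Q using c1 p by (simp add: divide_simps) (simp add: algebra_simps power2_eq_square)
  qed
  have p: "1 - 2 * r * cos x + r^2 > 0"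
  proof -
    have "1 - 2 * r * cos x + r^2 = (1 - r * cos x)^2 + (r * sin x)^2"
      by (simp add: power_mult_distrib sin_squared_eq power2_diff algebra_simps)
    then show ?thesis using c1 by (smt (verit) zero_le_power2 zero_less_power2)
  qed
  have eq: "(1 - r^2) / (1 - 2 * r * cos x + r^2) / s = 1 / (A - B * cos x)"
    using key p s(1) q by (simp add: divide_simps)
  show ?thesis
    using DERIV_cdivide[OF E, of s] unfolding eq .

qed
lemma theta_int:
  fixes A B :: real
  assumes A: "A > 0" and B: "0 \<le> B" "B < A"
  shows "(\<integral>\<^sup>+\<theta>. ennreal (1 / (A - B * cos \<theta>)^2) * indicator {0..2*pi} \<theta> \<partial>lborel)
          = ennreal (2 * pi * A / (sqrt (A^2 - B^2))^3)"
proof -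
  define s where "s = sqrt (A^2 - B^2)"
  define r where "r = B / (A + s)"
  define F1 where "F1 = (\<lambda>x. (x + 2 * arctan (r * sin x / (1 - r * cos x))) / s)"
  define F2 where "F2 = (\<lambda>x. (B * sin x / (A - B * cos x) + A * F1 x) / s^2)"
  have s: "s > 0" "s^2 = A^2 - B^2" using A B by (auto simp: s_def power_strict_mono)
  have q: "A - B * cos x > 0" for x
    using B cos_le_one[of x] by (smt (verit) mult_left_le mult_nonneg_nonneg)
  have d1: "(F1 has_real_derivative 1 / (A - B * cos x)) (at x)" for x
    unfolding F1_def r_def s_def by (rule F1_deriv[OF A B])
  have d2: "(F2 has_real_derivative 1 / (A - B * cos x)^2) (at x)" for x
  proof -
    have n1: "((\<lambda>x. B * sin x / (A - B * cos x)) has_real_derivative (B * cos x * (A - B * cos x) - B * sin x * (- (B * - sin x))) / (A - B * cos x)^2) (at x)"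
      apply (rule derivative_eq_intros refl)+
      using q[of x] apply (auto simp: power2_eq_square)
      done
    have "(F2 has_real_derivative ((B * cos x * (A - B * cos x) - B * sin x * (- (B * - sin x))) / (A - B * cos x)^2 + A * (1 / (A - B * cos x))) / s^2) (at x)"
      unfolding F2_def by (intro DERIV_cdivide DERIV_add n1 DERIV_cmult d1)
    moreover have "((B * cos x * (A - B * cos x) - B * sin x * (- (B * - sin x))) / (A - B * cos x)^2 + A * (1 / (A - B * cos x))) / s^2 = 1 / (A - B * cos x)^2"
    proof -
      have sc: "sin x * sin x + cos x * cos x = 1" using sin_cos_squared_add[of x] by (simp add: power2_eq_square)
      have "(B * cos x * (A - B * cos x) - B * sin x * (- (B * - sin x))) / (A - B * cos x)^2 + A * (1 / (A - B * cos x))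
         = (A^2 - B^2) / (A - B * cos x)^2"
        using q[of x] by (simp add: divide_simps) (use sc in algebra)
      then show ?thesis using s(1) unfolding s(2)[symmetric] by simp
    qed
    ultimately show ?thesis by simp
  qed
  have "((\<lambda>x. 1 / (A - B * cos x)^2) has_integral (F2 (2*pi) - F2 0)) {0..2*pi}"
    by (rule fundamental_theorem_of_calculus) (auto intro: DERIV_subset d2 simp: has_real_derivative_iff_has_vector_derivative[symmetric])
  moreover have "F2 (2*pi) - F2 0 = 2 * pi * A / (sqrt (A^2 - B^2))^3"
  proof -
    have "F2 (2*pi) - F2 0 = 2 * pi * A / s^3"
      using s(1) by (simp add: F2_def F1_def field_simps power2_eq_square power3_eq_cube)
    then show ?thesis by (simp add: s_def)
  qed
  ultimately have I: "((\<lambda>x. 1 / (A - B * cos x)^2) has_integral (2 * pi * A / (sqrt (A^2 - B^2))^3)) {0..2*pi}"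
    by simp
  have "(\<integral>\<^sup>+\<theta>. ennreal (1 / (A - B * cos \<theta>)^2) * indicator {0..2*pi} \<theta> \<partial>lborel)
      = (\<integral>\<^sup>+\<theta>. ennreal (indicator {0..2*pi} \<theta> * (1 / (A - B * cos \<theta>)^2)) \<partial>lborel)"
    by (intro nn_integral_cong) (auto split: split_indicator)
  also have "\<dots> = ennreal (2 * pi * A / (sqrt (A^2 - B^2))^3)"
    by (rule nn_integral_has_integral_lebesgue[OF _ I]) simp
  finally show ?thesis .
qed

lemma exp_int:
  fixes q :: real assumes q: "q > 0"
  shows "(\<integral>\<^sup>+w. ennreal (w * exp (- q * w)) * indicator {0..} w \<partial>lborel) = ennreal (1 / q^2)"
proof -
  have "(\<integral>\<^sup>+w. ennreal (w * exp (- q * w)) * indicator {0..} w \<partial>lborel) =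
        0 - (- (1 + q * 0) * exp (- q * 0) / q^2)"
  proof (rule nn_integral_FTC_atLeast)
    show "(\<lambda>w. w * exp (- q * w)) \<in> borel_measurable borel" by measurable
    show "((\<lambda>w. - (1 + q * w) * exp (- q * w) / q^2) has_real_derivative x * exp (- q * x)) (at x)" for x
      apply (rule derivative_eq_intros refl)+
      using q by (simp add: divide_simps) (use q in \<open>simp add: algebra_simps power2_eq_square\<close>)
    show "0 \<le> x \<Longrightarrow> 0 \<le> x * exp (- q * x)" for x by simp
    show "((\<lambda>w. - (1 + q * w) * exp (- q * w) / q^2) \<longlongrightarrow> 0) at_top"
      using q by real_asymp
  qed
  then show ?thesis by simp
qed

lemma bessel_nn:
  "ennreal (besselI0 x) = (\<integral>\<^sup>+\<theta>. ennreal (exp (x * cos \<theta>) / (2 * pi)) * indicator {0..2*pi} \<theta> \<partial>lborel)"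
proof -
  have c: "continuous_on {0..2*pi} (\<lambda>\<theta>. exp (x * cos \<theta>))"
    by (intro continuous_intros)
  have I: "((\<lambda>\<theta>. exp (x * cos \<theta>) / (2 * pi)) has_integral besselI0 x) {0..2*pi}"
  proof -
    have "((\<lambda>\<theta>. exp (x * cos \<theta>) / (2 * pi)) has_integral integral {0..2*pi} (\<lambda>\<theta>. exp (x * cos \<theta>)) / (2 * pi)) {0..2*pi}"
      by (rule has_integral_divide[OF integrable_integral[OF integrable_continuous_interval[OF c]]])
    then show ?thesis unfolding besselI0_def by simp
  qed
  have "(\<integral>\<^sup>+\<theta>. ennreal (exp (x * cos \<theta>) / (2 * pi)) * indicator {0..2*pi} \<theta> \<partial>lborel)
     = (\<integral>\<^sup>+\<theta>. ennreal (indicator {0..2*pi} \<theta> * (exp (x * cos \<theta>) / (2 * pi))) \<partial>lborel)"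
    by (intro nn_integral_cong) (auto split: split_indicator)
  also have "\<dots> = ennreal (besselI0 x)"
    by (rule nn_integral_has_integral_lebesgue[OF _ I]) simp
  finally show ?thesis ..
qed

definition Kt :: "real \<Rightarrow> real \<Rightarrow> real \<Rightarrow> real \<times> real \<Rightarrow> real \<Rightarrow> real" where
  "Kt gM gE \<rho> h \<theta> = (if fst h \<ge> 0 \<and> snd h \<ge> 0 then
     1 / (gM * gE * (1 - \<rho>)) * exp (- (1 / (1 - \<rho>)) * (fst h / gM + snd h / gE)) *
     (exp (2 / (1 - \<rho>) * sqrt (\<rho> * fst h * snd h / (gM * gE)) * cos \<theta>) / (2 * pi)) else 0)"

lemma Kt_measurable0: "(\<lambda>x. Kt gM gE \<rho> (fst (fst x), snd (fst x)) (snd x)) \<in> borel_measurable ((borel \<Otimes>\<^sub>M borel) \<Otimes>\<^sub>M borel)"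
  unfolding Kt_def by measurable

lemma Kt_measurable[measurable]: "(\<lambda>x. Kt gM gE \<rho> (fst x) (snd x)) \<in> borel_measurable (borel \<Otimes>\<^sub>M borel)"
  using Kt_measurable0[of gM gE \<rho>] unfolding borel_prod by simp

lemma dens_repr:
  assumes "gM > 0" "gE > 0" "\<rho> < 1"
  shows "ennreal (rayleigh_density gM gE \<rho> h) =
         (\<integral>\<^sup>+\<theta>. ennreal (Kt gM gE \<rho> h \<theta>) * indicator {0..2*pi} \<theta> \<partial>lborel)"
proof (cases "fst h \<ge> 0 \<and> snd h \<ge> 0")
  case True
  define c where "c = 1 / (gM * gE * (1 - \<rho>)) * exp (- (1 / (1 - \<rho>)) * (fst h / gM + snd h / gE))"
  define x where "x = 2 / (1 - \<rho>) * sqrt (\<rho> * fst h * snd h / (gM * gE))"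
  have c0: "c \<ge> 0" using assms by (simp add: c_def)
  have "rayleigh_density gM gE \<rho> h = c * besselI0 x"
    using True by (simp add: rayleigh_density_def c_def x_def)
  then have "ennreal (rayleigh_density gM gE \<rho> h) = ennreal c * ennreal (besselI0 x)"
    using c0 by (simp add: ennreal_mult')
  also have "\<dots> = ennreal c * (\<integral>\<^sup>+\<theta>. ennreal (exp (x * cos \<theta>) / (2 * pi)) * indicator {0..2*pi} \<theta> \<partial>lborel)"
    by (simp add: bessel_nn)
  also have "\<dots> = (\<integral>\<^sup>+\<theta>. ennreal c * (ennreal (exp (x * cos \<theta>) / (2 * pi)) * indicator {0..2*pi} \<theta>) \<partial>lborel)"
    by (rule nn_integral_cmult[symmetric]) measurable
  also have "\<dots> = (\<integral>\<^sup>+\<theta>. ennreal (Kt gM gE \<rho> h \<theta>) * indicator {0..2*pi} \<theta> \<partial>lborel)"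
  proof (intro nn_integral_cong)
    fix \<theta>
    have "Kt gM gE \<rho> h \<theta> = c * (exp (x * cos \<theta>) / (2 * pi))"
      unfolding Kt_def c_def x_def using True by simp
    then show "ennreal c * (ennreal (exp (x * cos \<theta>) / (2 * pi)) * indicator {0..2*pi} \<theta>) =
      ennreal (Kt gM gE \<rho> h \<theta>) * indicator {0..2*pi} \<theta>"
      by (simp only: ennreal_mult'[OF c0] mult.assoc)
  qed
  finally show ?thesis .
next
  case False
  then have "\<And>\<theta>. Kt gM gE \<rho> h \<theta> = 0" "rayleigh_density gM gE \<rho> h = 0"
    by (auto simp: rayleigh_density_def Kt_def)
  then show ?thesis by simp
qed

lemma rayleigh_measurable[measurable]:
  assumes "gM > 0" "gE > 0" "\<rho> < 1"
  shows "(\<lambda>h. ennreal (rayleigh_density gM gE \<rho> h)) \<in> borel_measurable borel"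
  by (subst dens_repr[OF assms]) measurable

definition Aq :: "real \<Rightarrow> real \<Rightarrow> real \<Rightarrow> real \<Rightarrow> real" where
  "Aq gM gE \<rho> t = (t / gM + 1 / gE) / (1 - \<rho>)"
definition Bq :: "real \<Rightarrow> real \<Rightarrow> real \<Rightarrow> real \<Rightarrow> real" where
  "Bq gM gE \<rho> t = 2 / (1 - \<rho>) * sqrt (\<rho> * t / (gM * gE))"

lemma Kt_sub:
  assumes w: "w > 0"
  shows "Kt gM gE \<rho> (t * w, w) \<theta> = (if t \<ge> 0 then 1 / (gM * gE * (1 - \<rho>)) / (2 * pi) *
            exp (- w * (Aq gM gE \<rho> t - Bq gM gE \<rho> t * cos \<theta>)) else 0)"
proof (cases "t \<ge> 0")
  case True
  have sq: "sqrt (\<rho> * (t * w) * w / (gM * gE)) = w * sqrt (\<rho> * t / (gM * gE))"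
  proof -
    have "\<rho> * (t * w) * w / (gM * gE) = w^2 * (\<rho> * t / (gM * gE))" by (simp add: power2_eq_square)
    then have "sqrt (\<rho> * (t * w) * w / (gM * gE)) = sqrt (w^2) * sqrt (\<rho> * t / (gM * gE))"
      by (simp only: real_sqrt_mult)
    then show ?thesis using w by simp
  qed
  have ee: "exp (- (1 / (1 - \<rho>)) * (t * w / gM + w / gE)) * exp (2 / (1 - \<rho>) * (w * sqrt (\<rho> * t / (gM * gE))) * cos \<theta>)
      = exp (- w * (Aq gM gE \<rho> t - Bq gM gE \<rho> t * cos \<theta>))"
    unfolding exp_add[symmetric] Aq_def Bq_def by (simp add: algebra_simps diff_divide_distrib add_divide_distrib)
  have K: "Kt gM gE \<rho> (t*w, w) \<theta> = 1 / (gM * gE * (1 - \<rho>)) * exp (- (1 / (1 - \<rho>)) * (t * w / gM + w / gE)) *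
     (exp (2 / (1 - \<rho>) * (w * sqrt (\<rho> * t / (gM * gE))) * cos \<theta>) / (2 * pi))"
    unfolding Kt_def fst_conv snd_conv sq using True w by simp
  show ?thesis using True unfolding K ee[symmetric] by simp
next
  case False
  then have "t * w < 0" using w by (simp add: mult_neg_pos)
  then show ?thesis using False by (simp add: Kt_def)
qed

definition Dq :: "real \<Rightarrow> real \<Rightarrow> real \<Rightarrow> real \<Rightarrow> real" where
  "Dq gM gE \<rho> t = (t / gM + 1 / gE)^2 - 4 * \<rho> * t / (gM * gE)"
definition gden :: "real \<Rightarrow> real \<Rightarrow> real \<Rightarrow> real \<Rightarrow> real" where
  "gden gM gE \<rho> t = (1 - \<rho>) * (t / gM + 1 / gE) / (gM * gE * (sqrt (Dq gM gE \<rho> t))^3)"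

lemma AB_facts:
  assumes gM: "gM > 0" and gE: "gE > 0" and r: "0 \<le> \<rho>" "\<rho> < 1" and t: "t \<ge> 0"
  shows "Dq gM gE \<rho> t > 0" "Aq gM gE \<rho> t > 0" "Bq gM gE \<rho> t \<ge> 0"
        "(Aq gM gE \<rho> t)^2 - (Bq gM gE \<rho> t)^2 = Dq gM gE \<rho> t / (1 - \<rho>)^2"
        "Bq gM gE \<rho> t < Aq gM gE \<rho> t"
proof -
  have D: "Dq gM gE \<rho> t = (t / gM - 1 / gE)^2 + 4 * (1 - \<rho>) * t / (gM * gE)"
    using gM gE unfolding Dq_def by (simp add: power2_eq_square divide_simps) (simp add: algebra_simps)
  have "4 * (1 - \<rho>) * t / (gM * gE) \<ge> 0" using gM gE r t by simp
  moreover have "(t / gM - 1 / gE)^2 > 0 \<or> 4 * (1 - \<rho>) * t / (gM * gE) > 0"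
  proof (cases "t = 0")
    case True then show ?thesis using gE by simp
  next
    case False then show ?thesis using gM gE r t by simp
  qed
  ultimately show Dp: "Dq gM gE \<rho> t > 0" unfolding D by (smt (verit) zero_le_power2)
  show Ap: "Aq gM gE \<rho> t > 0" unfolding Aq_def using gM gE r t by (intro divide_pos_pos add_nonneg_pos) auto
  show B0: "Bq gM gE \<rho> t \<ge> 0" unfolding Bq_def using gM gE r t by simp
  have Bsq: "(Bq gM gE \<rho> t)^2 = 4 * \<rho> * t / (gM * gE) / (1 - \<rho>)^2"
    unfolding Bq_def using gM gE r t by (simp add: power_mult_distrib power_divide)
  show eq: "(Aq gM gE \<rho> t)^2 - (Bq gM gE \<rho> t)^2 = Dq gM gE \<rho> t / (1 - \<rho>)^2"
    unfolding Bsq unfolding Aq_def Dq_def using r by (simp add: power_divide diff_divide_distrib)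
  have "(Bq gM gE \<rho> t)^2 < (Aq gM gE \<rho> t)^2" using eq Dp r by (smt (verit) divide_pos_pos zero_less_power)
  then show "Bq gM gE \<rho> t < Aq gM gE \<rho> t" using Ap B0 by (simp add: power_less_imp_less_base)
qed

definition Psi :: "real \<Rightarrow> real \<Rightarrow> real \<Rightarrow> real \<Rightarrow> real \<Rightarrow> real \<Rightarrow> real" where
  "Psi gM gE \<rho> t w \<theta> = (if t \<ge> 0 then 1 / (gM * gE * (1 - \<rho>)) / (2 * pi) *
            exp (- w * (Aq gM gE \<rho> t - Bq gM gE \<rho> t * cos \<theta>)) else 0)"

lemma Psi_measurable[measurable]:
  "(\<lambda>x. Psi gM gE \<rho> (fst (fst x)) (snd (fst x)) (snd x)) \<in> borel_measurable ((borel \<Otimes>\<^sub>M borel) \<Otimes>\<^sub>M borel)"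
  unfolding Psi_def Aq_def Bq_def by measurable

lemma inner_t:
  assumes gM: "gM > 0" and gE: "gE > 0" and r: "0 \<le> \<rho>" "\<rho> < 1"
  shows "(\<integral>\<^sup>+\<theta>. \<integral>\<^sup>+w. indicator {0<..} w * ennreal w * ennreal (Psi gM gE \<rho> t w \<theta>) * indicator {0..2*pi} \<theta> \<partial>lborel \<partial>lborel)
         = ennreal (gden gM gE \<rho> t) * indicator {0..} t"
proof (cases "t \<ge> 0")
  case False
  then show ?thesis by (simp add: Psi_def)
next
  case True
  define A where "A = Aq gM gE \<rho> t"
  define B where "B = Bq gM gE \<rho> t"
  define C0 where "C0 = 1 / (gM * gE * (1 - \<rho>)) / (2 * pi)"
  have C0: "C0 > 0" unfolding C0_def using gM gE r by simp
  note AB = AB_facts[OF gM gE r True, folded A_def B_def]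
  have q: "A - B * cos \<theta> > 0" for \<theta>
    using AB cos_le_one[of \<theta>] by (smt (verit) mult_left_le)
  have w_int: "(\<integral>\<^sup>+w. indicator {0<..} w * ennreal w * ennreal (Psi gM gE \<rho> t w \<theta>) * indicator {0..2*pi} \<theta> \<partial>lborel)
      = ennreal C0 * indicator {0..2*pi} \<theta> * ennreal (1 / (A - B * cos \<theta>)^2)" for \<theta>
  proof -
    have "(\<integral>\<^sup>+w. indicator {0<..} w * ennreal w * ennreal (Psi gM gE \<rho> t w \<theta>) * indicator {0..2*pi} \<theta> \<partial>lborel)
      = (\<integral>\<^sup>+w. (ennreal C0 * indicator {0..2*pi} \<theta>) * (ennreal (w * exp (- (A - B * cos \<theta>) * w)) * indicator {0..} w) \<partial>lborel)"
    proof (intro nn_integral_cong)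
      fix w :: real
      show "indicator {0<..} w * ennreal w * ennreal (Psi gM gE \<rho> t w \<theta>) * indicator {0..2*pi} \<theta>
        = (ennreal C0 * indicator {0..2*pi} \<theta>) * (ennreal (w * exp (- (A - B * cos \<theta>) * w)) * indicator {0..} w)"
      proof (cases "w > 0")
        case True
        have "Psi gM gE \<rho> t w \<theta> = C0 * exp (- (A - B * cos \<theta>) * w)"
        proof -
          have "- w * (A - B * cos \<theta>) = - (A - B * cos \<theta>) * w" by (simp add: algebra_simps)
          then show ?thesis using \<open>t \<ge> 0\<close> unfolding Psi_def C0_def A_def B_def by simp
        qed
        then show ?thesis using True C0
          by (simp add: ennreal_mult[symmetric] mult_ac split: split_indicator)
      next
        case False
        then show ?thesis by (cases "w = 0") (auto split: split_indicator)
      qed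
    qed
    also have "\<dots> = ennreal C0 * indicator {0..2*pi} \<theta> * (\<integral>\<^sup>+w. ennreal (w * exp (- (A - B * cos \<theta>) * w)) * indicator {0..} w \<partial>lborel)"
      by (rule nn_integral_cmult) measurable
    also have "\<dots> = ennreal C0 * indicator {0..2*pi} \<theta> * ennreal (1 / (A - B * cos \<theta>)^2)"
      by (simp only: exp_int[OF q])
    finally show ?thesis .
  qed
  have "(\<integral>\<^sup>+\<theta>. \<integral>\<^sup>+w. indicator {0<..} w * ennreal w * ennreal (Psi gM gE \<rho> t w \<theta>) * indicator {0..2*pi} \<theta> \<partial>lborel \<partial>lborel)
      = (\<integral>\<^sup>+\<theta>. ennreal C0 * (ennreal (1 / (A - B * cos \<theta>)^2) * indicator {0..2*pi} \<theta>) \<partial>lborel)"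
    unfolding w_int by (intro nn_integral_cong) (simp add: mult_ac)
  also have "\<dots> = ennreal C0 * (\<integral>\<^sup>+\<theta>. ennreal (1 / (A - B * cos \<theta>)^2) * indicator {0..2*pi} \<theta> \<partial>lborel)"
    by (rule nn_integral_cmult) measurable
  also have "\<dots> = ennreal C0 * ennreal (2 * pi * A / (sqrt (A^2 - B^2))^3)"
    using AB by (simp add: theta_int)
  also have "\<dots> = ennreal (gden gM gE \<rho> t)"
  proof -
    have s: "sqrt (A^2 - B^2) = sqrt (Dq gM gE \<rho> t) / (1 - \<rho>)"
      using AB(4) r by (simp add: real_sqrt_divide)
    have X: "sqrt (Dq gM gE \<rho> t) > 0" using AB(1) by simp
    have alg: "1 / (gM * gE * (1 - \<rho>)) / (2 * pi) * (2 * pi * ((t / gM + 1 / gE) / (1 - \<rho>)) / (X / (1 - \<rho>))^3)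
        = (1 - \<rho>) * (t / gM + 1 / gE) / (gM * gE * X^3)" if "X > 0" for X
    proof -
      have k: "1 - \<rho> > 0" using r by simp
      have g: "gM * gE > 0" using gM gE by simp
      have gen: "1 / (g * k) / (2 * pi) * (2 * pi * (u / k) / (X / k)^3) = k * u / (g * X^3)"
        if "k > 0" "g > 0" "X > 0" for g k u X :: real
        using that by (simp add: power_divide) (simp add: field_simps power3_eq_cube)
      show ?thesis using gen[OF k g that] by simp
    qed
    have "C0 * (2 * pi * A / (sqrt (A^2 - B^2))^3) = gden gM gE \<rho> t"
      unfolding s unfolding C0_def A_def gden_def Aq_def by (rule alg[OF X])
    then show ?thesis using C0 by (simp only: ennreal_mult'[symmetric] less_imp_le)
  qed
  finally show ?thesis using True by simp
qed

lemma Psi_meas[measurable (raw)]: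
  assumes [measurable]: "f \<in> borel_measurable M" "g \<in> borel_measurable M" "h \<in> borel_measurable M"
  shows "(\<lambda>x. Psi gM gE \<rho> (f x) (g x) (h x)) \<in> borel_measurable M"
  unfolding Psi_def Aq_def Bq_def by measurable

lemma main_reduction:
  fixes \<Phi> :: "real \<times> real \<Rightarrow> ennreal" and \<phi> :: "real \<Rightarrow> ennreal"
  assumes gM: "gM > 0" and gE: "gE > 0" and r: "0 \<le> \<rho>" "\<rho> < 1"
  assumes [measurable]: "\<Phi> \<in> borel_measurable borel" "\<phi> \<in> borel_measurable borel"
  assumes sub: "\<And>t w. w > 0 \<Longrightarrow> \<Phi> (t * w, w) = \<phi> t"
  shows "(\<integral>\<^sup>+h. \<Phi> h \<partial>gains_distr gM gE \<rho>) = (\<integral>\<^sup>+t. \<phi> t * ennreal (gden gM gE \<rho> t) * indicator {0..} t \<partial>lborel)"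
proof -
  define I where "I h = (\<integral>\<^sup>+\<theta>. ennreal (Kt gM gE \<rho> h \<theta>) * indicator {0..2*pi} \<theta> \<partial>lborel)" for h
  have Im: "(\<lambda>x. Kt gM gE \<rho> (fst x) (snd x)) \<in> borel_measurable (lborel \<Otimes>\<^sub>M lborel)"
    using Kt_measurable by (simp add: measurable_cong_sets[OF sets_pair_measure_cong[OF sets_lborel sets_lborel] refl])
  have I_meas[measurable]: "I \<in> borel_measurable lborel"
    unfolding I_def by measurable
  have S1: "(\<integral>\<^sup>+h. \<Phi> h \<partial>gains_distr gM gE \<rho>) = (\<integral>\<^sup>+h. \<Phi> h * I h \<partial>lborel)"
    unfolding gains_distr_def
    apply (subst nn_integral_density)
    using rayleigh_measurable[OF gM gE r(2)] apply simp
     apply simp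
    apply (intro nn_integral_cong)
    apply (simp add: I_def dens_repr[OF gM gE r(2)] mult.commute)
    done
  have S3: "(\<integral>\<^sup>+h. \<Phi> h * I h \<partial>lborel) = (\<integral>\<^sup>+w. \<integral>\<^sup>+u. \<Phi> (u, w) * I (u, w) \<partial>lborel \<partial>lborel)"
  proof -
    have m: "(\<lambda>h. \<Phi> h * I h) \<in> borel_measurable (lborel \<Otimes>\<^sub>M lborel)"
      unfolding lborel_prod by measurable
    show ?thesis
      using lborel_pair.nn_integral_snd[OF m] unfolding lborel_prod by simp
  qed
  define J where "J t w = (\<integral>\<^sup>+\<theta>. ennreal (Psi gM gE \<rho> t w \<theta>) * indicator {0..2*pi} \<theta> \<partial>lborel)" for t w
  have S4: "(\<integral>\<^sup>+u. \<Phi> (u, w) * I (u, w) \<partial>lborel) = indicator {0<..} w * (ennreal w * (\<integral>\<^sup>+t. \<phi> t * J t w \<partial>lborel))"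
    if "w \<noteq> 0" for w
  proof (cases "w > 0")
    case True
    have "(\<integral>\<^sup>+u. \<Phi> (u, w) * I (u, w) \<partial>lborel) = ennreal \<bar>w\<bar> * (\<integral>\<^sup>+x. \<Phi> (0 + w * x, w) * I (0 + w * x, w) \<partial>lborel)"
      by (rule nn_integral_real_affine) (use True in auto)
    also have "(\<integral>\<^sup>+x. \<Phi> (0 + w * x, w) * I (0 + w * x, w) \<partial>lborel) = (\<integral>\<^sup>+t. \<phi> t * J t w \<partial>lborel)"
    proof (intro nn_integral_cong)
      fix x
      show "\<Phi> (0 + w * x, w) * I (0 + w * x, w) = \<phi> x * J x w"
        unfolding add_0 mult.commute[of w x] I_def J_def using True by (simp add: sub Kt_sub Psi_def)
    qed
    finally show ?thesis using True by simp
  next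
    case False
    then have "w < 0" using that by simp
    then have "I (u, w) = 0" for u by (simp add: I_def Kt_def)
    then show ?thesis using False by simp
  qed
  define F where "F w t \<theta> = \<phi> t * (indicator {0<..} w * ennreal w * ennreal (Psi gM gE \<rho> t w \<theta>) * indicator {0..2*pi} \<theta>)"
    for w t \<theta> :: real
  have Fm[measurable (raw)]: "(\<lambda>x. F (f x) (g x) (h x)) \<in> borel_measurable M"
    if [measurable]: "f \<in> borel_measurable M" "g \<in> borel_measurable M" "h \<in> borel_measurable M"
    for f g h :: "'z \<Rightarrow> real" and M
    unfolding F_def by measurable
  have S5: "(\<integral>\<^sup>+w. \<integral>\<^sup>+u. \<Phi> (u, w) * I (u, w) \<partial>lborel \<partial>lborel) = (\<integral>\<^sup>+w. \<integral>\<^sup>+t. \<integral>\<^sup>+\<theta>. F w t \<theta> \<partial>lborel \<partial>lborel \<partial>lborel)"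
  proof (rule nn_integral_cong_AE)
    show "AE w in lborel. (\<integral>\<^sup>+u. \<Phi> (u, w) * I (u, w) \<partial>lborel) = (\<integral>\<^sup>+t. \<integral>\<^sup>+\<theta>. F w t \<theta> \<partial>lborel \<partial>lborel)"
      using AE_lborel_singleton[of 0]
    proof (rule AE_mp, intro AE_I2 impI)
      fix w :: real assume w: "w \<noteq> 0"
      have "(\<integral>\<^sup>+u. \<Phi> (u, w) * I (u, w) \<partial>lborel) = (indicator {0<..} w * ennreal w) * (\<integral>\<^sup>+t. \<phi> t * J t w \<partial>lborel)"
        using S4[OF w] by (simp add: mult.assoc)
      also have "\<dots> = (\<integral>\<^sup>+t. (indicator {0<..} w * ennreal w) * (\<phi> t * J t w) \<partial>lborel)"
        by (rule nn_integral_cmult[symmetric]) (unfold J_def, measurable)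
      also have "\<dots> = (\<integral>\<^sup>+t. \<integral>\<^sup>+\<theta>. F w t \<theta> \<partial>lborel \<partial>lborel)"
      proof (intro nn_integral_cong)
        fix t :: real
        have "(indicator {0<..} w * ennreal w) * (\<phi> t * J t w) = (\<integral>\<^sup>+\<theta>. (indicator {0<..} w * ennreal w * \<phi> t) * (ennreal (Psi gM gE \<rho> t w \<theta>) * indicator {0..2*pi} \<theta>) \<partial>lborel)"
          unfolding J_def by (subst nn_integral_cmult) (auto simp: mult_ac)
        also have "\<dots> = (\<integral>\<^sup>+\<theta>. F w t \<theta> \<partial>lborel)"
          unfolding F_def by (intro nn_integral_cong) (simp add: mult_ac)
        finally show "(indicator {0<..} w * ennreal w) * (\<phi> t * J t w) = (\<integral>\<^sup>+\<theta>. F w t \<theta> \<partial>lborel)" .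
      qed
      finally show "(\<integral>\<^sup>+u. \<Phi> (u, w) * I (u, w) \<partial>lborel) = (\<integral>\<^sup>+t. \<integral>\<^sup>+\<theta>. F w t \<theta> \<partial>lborel \<partial>lborel)" .
    qed
  qed
  have S6: "(\<integral>\<^sup>+w. \<integral>\<^sup>+t. \<integral>\<^sup>+\<theta>. F w t \<theta> \<partial>lborel \<partial>lborel \<partial>lborel) = (\<integral>\<^sup>+t. \<integral>\<^sup>+w. \<integral>\<^sup>+\<theta>. F w t \<theta> \<partial>lborel \<partial>lborel \<partial>lborel)"
    by (rule lborel_pair.Fubini') measurable
  have S7: "(\<integral>\<^sup>+w. \<integral>\<^sup>+\<theta>. F w t \<theta> \<partial>lborel \<partial>lborel) = \<phi> t * (ennreal (gden gM gE \<rho> t) * indicator {0..} t)" for t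
  proof -
    have "(\<integral>\<^sup>+w. \<integral>\<^sup>+\<theta>. F w t \<theta> \<partial>lborel \<partial>lborel) = (\<integral>\<^sup>+\<theta>. \<integral>\<^sup>+w. F w t \<theta> \<partial>lborel \<partial>lborel)"
      by (rule lborel_pair.Fubini') measurable
    also have "\<dots> = (\<integral>\<^sup>+\<theta>. \<phi> t * (\<integral>\<^sup>+w. indicator {0<..} w * ennreal w * ennreal (Psi gM gE \<rho> t w \<theta>) * indicator {0..2*pi} \<theta> \<partial>lborel) \<partial>lborel)"
      unfolding F_def by (intro nn_integral_cong nn_integral_cmult) measurable
    also have "\<dots> = \<phi> t * (\<integral>\<^sup>+\<theta>. \<integral>\<^sup>+w. indicator {0<..} w * ennreal w * ennreal (Psi gM gE \<rho> t w \<theta>) * indicator {0..2*pi} \<theta> \<partial>lborel \<partial>lborel)"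
      by (rule nn_integral_cmult) measurable
    also have "\<dots> = \<phi> t * (ennreal (gden gM gE \<rho> t) * indicator {0..} t)"
      by (simp only: inner_t[OF gM gE r])
    finally show ?thesis .
  qed
  show ?thesis
    unfolding S1 S3 S5 S6 S7 by (simp add: mult_ac)
qed

definition Dg :: "real \<Rightarrow> real \<Rightarrow> real \<Rightarrow> real \<Rightarrow> real" where
  "Dg a e \<rho> t = (a * t + e)^2 - 4 * \<rho> * a * e * t"
definition gg :: "real \<Rightarrow> real \<Rightarrow> real \<Rightarrow> real \<Rightarrow> real" where
  "gg a e \<rho> t = a * e * (1 - \<rho>) * (a * t + e) / (sqrt (Dg a e \<rho> t))^3"
definition Gb :: "real \<Rightarrow> real \<Rightarrow> real \<Rightarrow> real \<Rightarrow> real" where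
  "Gb a e \<rho> t = (1 - (a * t - e) / sqrt (Dg a e \<rho> t)) / 2"

lemma Dg_pos:
  assumes "a > 0" "e > 0" "0 \<le> \<rho>" "\<rho> < 1" "t \<ge> 0"
  shows "Dg a e \<rho> t > 0"
proof -
  have "Dg a e \<rho> t = (a * t - e)^2 + 4 * (1 - \<rho>) * a * e * t"
    unfolding Dg_def by (simp add: power2_eq_square algebra_simps)
  moreover have "4 * (1 - \<rho>) * a * e * t \<ge> 0" using assms by simp
  moreover have "(a * t - e)^2 > 0 \<or> 4 * (1 - \<rho>) * a * e * t > 0"
    using assms by (cases "t = 0") auto
  ultimately show ?thesis by (smt (verit) zero_le_power2)
qed

lemma Gb_deriv:
  assumes D: "Dg a e \<rho> t > 0"
  shows "((\<lambda>t. - Gb a e \<rho> t) has_real_derivative gg a e \<rho> t) (at t)"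
proof -
  define X where "X = sqrt (Dg a e \<rho> t)"
  define D' where "D' = 2 * (a * (a * t + e) - 2 * \<rho> * a * e)"
  have X: "X > 0" "X^2 = Dg a e \<rho> t" using D by (auto simp: X_def)
  have dD: "(Dg a e \<rho> has_real_derivative D') (at t)"
    unfolding Dg_def D'_def
    by (rule derivative_eq_intros refl)+ (simp add: algebra_simps)
  have dX: "((\<lambda>t. sqrt (Dg a e \<rho> t)) has_real_derivative D' / (2 * X)) (at t)"
    using DERIV_chain2[OF DERIV_real_sqrt[OF D] dD] by (simp add: X_def divide_simps mult.commute)
  have dQ: "((\<lambda>t. (a * t - e) / sqrt (Dg a e \<rho> t)) has_real_derivative (a * X - (a * t - e) * (D' / (2 * X))) / X^2) (at t)"
  proof -
    have dN: "((\<lambda>t. a * t - e) has_real_derivative a) (at t)"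
      by (rule derivative_eq_intros refl)+ simp
    show ?thesis using DERIV_divide[OF dN dX] X by (simp add: X_def power2_eq_square)
  qed
  have fe: "(\<lambda>t. - Gb a e \<rho> t) = (\<lambda>t. ((a * t - e) / sqrt (Dg a e \<rho> t) - 1) / 2)"
    by (auto simp: Gb_def fun_eq_iff minus_divide_left)
  have d: "((\<lambda>t. - Gb a e \<rho> t) has_real_derivative ((a * X - (a * t - e) * (D' / (2 * X))) / X^2) / 2) (at t)"
    unfolding fe using DERIV_cdivide[OF DERIV_diff[OF dQ DERIV_const[of 1 "at t"]], of 2] by simp
  have "((a * X - (a * t - e) * (D' / (2 * X))) / X^2) / 2 = gg a e \<rho> t"
  proof -
    have "((a * X - (a * t - e) * (D' / (2 * X))) / X^2) / 2 = (a * X^2 - (a * t - e) * D' / 2) / (2 * X^3)"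
      using X(1) by (simp add: field_simps power2_eq_square power3_eq_cube)
    also have "a * X^2 - (a * t - e) * D' / 2 = 2 * (a * e * (1 - \<rho>) * (a * t + e))"
    proof -
      have "(a * t - e) * D' / 2 = (a * t - e) * (a * (a * t + e) - 2 * \<rho> * a * e)"
        unfolding D'_def by simp
      then show ?thesis unfolding X(2) Dg_def by (simp add: power2_eq_square algebra_simps)
    qed
    finally show ?thesis unfolding gg_def X_def[symmetric] using X(1) by (simp add: field_simps)
  qed
  then show ?thesis using d by simp
qed

lemma gg_nonneg:
  assumes "a > 0" "e > 0" "0 \<le> \<rho>" "\<rho> < 1" "t \<ge> 0"
  shows "gg a e \<rho> t \<ge> 0"
  unfolding gg_def using assms Dg_pos[OF assms] by (intro divide_nonneg_nonneg mult_nonneg_nonneg) auto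

lemma gg_int:
  assumes a: "a > 0" and e: "e > 0" and r: "0 \<le> \<rho>" "\<rho> < 1"
  shows "(\<integral>\<^sup>+t. ennreal (gg a e \<rho> t) * indicator {0..} t \<partial>lborel) = 1"
proof -
  have "(\<integral>\<^sup>+t. ennreal (gg a e \<rho> t) * indicator {0..} t \<partial>lborel) = 0 - (- Gb a e \<rho> 0)"
  proof (rule nn_integral_FTC_atLeast)
    show "gg a e \<rho> \<in> borel_measurable borel" unfolding gg_def Dg_def by measurable
    show "((\<lambda>t. - Gb a e \<rho> t) has_real_derivative gg a e \<rho> x) (at x)" if "0 \<le> x" for x
      by (rule Gb_deriv[OF Dg_pos[OF a e r that]])
    show "0 \<le> x \<Longrightarrow> 0 \<le> gg a e \<rho> x" for x using gg_nonneg[OF a e r] by blast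
    show "((\<lambda>t. - Gb a e \<rho> t) \<longlongrightarrow> 0) at_top"
      unfolding Gb_def Dg_def using a e r by real_asymp
  qed
  also have "Gb a e \<rho> 0 = 1" using e by (simp add: Gb_def Dg_def)
  finally show ?thesis by simp
qed

definition P1 :: "real \<Rightarrow> real \<Rightarrow> real \<Rightarrow> real \<Rightarrow> real" where
  "P1 a e \<rho> t = sqrt (Dg a e \<rho> t) + a * t + e - 2 * \<rho> * e"
definition P2 :: "real \<Rightarrow> real \<Rightarrow> real \<Rightarrow> real \<Rightarrow> real" where
  "P2 a e \<rho> t = sqrt (Dg a e \<rho> t) + a * t + e - 2 * \<rho> * a * t"
definition Hf :: "real \<Rightarrow> real \<Rightarrow> real \<Rightarrow> real \<Rightarrow> real" where
  "Hf a e \<rho> t = ln t * (- Gb a e \<rho> t) + (ln t - ln (P1 a e \<rho> t) / 2 - ln (P2 a e \<rho> t) / 2)"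

lemma sqrt_Dg_ge:
  assumes "a > 0" "e > 0" "0 \<le> \<rho>" "\<rho> < 1" "t \<ge> 0"
  shows "sqrt (Dg a e \<rho> t) \<ge> \<bar>a * t - e\<bar>"
proof -
  have "Dg a e \<rho> t = (a * t - e)^2 + 4 * (1 - \<rho>) * a * e * t"
    unfolding Dg_def by (simp add: power2_eq_square algebra_simps)
  moreover have "4 * (1 - \<rho>) * a * e * t \<ge> 0" using assms by simp
  ultimately have "(a * t - e)^2 \<le> Dg a e \<rho> t" by simp
  then have "sqrt ((a * t - e)^2) \<le> sqrt (Dg a e \<rho> t)" by (rule real_sqrt_le_mono)
  then show ?thesis by simp
qed

lemma P_pos:
  assumes a: "a > 0" and e: "e > 0" and r: "0 \<le> \<rho>" "\<rho> < 1" and t: "t > 0"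
  shows "P1 a e \<rho> t > 0" "P2 a e \<rho> t > 0"
proof -
  have X: "sqrt (Dg a e \<rho> t) \<ge> \<bar>a * t - e\<bar>" using sqrt_Dg_ge[OF a e r] t by simp
  have at: "a * t > 0" using a t by simp
  have h1: "\<rho> * e < e" using r e by simp
  have "\<rho> * (a * t) < 1 * (a * t)" using r at by (intro mult_strict_right_mono) auto
  then have h2: "\<rho> * (a * t) < a * t" by simp
  have h3: "2 * \<rho> * a * t = 2 * (\<rho> * (a * t))" "2 * \<rho> * e = 2 * (\<rho> * e)" by simp_all
  show "P1 a e \<rho> t > 0" "P2 a e \<rho> t > 0" unfolding P1_def P2_def h3 using X at e h1 h2
    by linarith+
qed

lemma dX_lemma:
  assumes D: "Dg a e \<rho> t > 0"
  shows "((\<lambda>t. sqrt (Dg a e \<rho> t)) has_real_derivative (a * (a * t + e) - 2 * \<rho> * a * e) / sqrt (Dg a e \<rho> t)) (at t)"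
proof -
  have dD: "(Dg a e \<rho> has_real_derivative 2 * (a * (a * t + e) - 2 * \<rho> * a * e)) (at t)"
    unfolding Dg_def by (rule derivative_eq_intros refl)+ (simp add: algebra_simps)
  have e: "inverse (sqrt (Dg a e \<rho> t)) / 2 * (2 * (a * (a * t + e) - 2 * \<rho> * a * e)) = (a * (a * t + e) - 2 * \<rho> * a * e) / sqrt (Dg a e \<rho> t)"
    by (simp add: divide_simps)
  show ?thesis
    using DERIV_chain2[OF DERIV_real_sqrt[OF D] dD] unfolding e .
qed

lemma Hf_deriv:
  assumes a: "a > 0" and e: "e > 0" and r: "0 \<le> \<rho>" "\<rho> < 1" and t: "t > 0"
  shows "(Hf a e \<rho> has_real_derivative ln t * gg a e \<rho> t) (at t)"
proof -
  have D: "Dg a e \<rho> t > 0" using Dg_pos[OF a e r] t by simp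
  define X where "X = sqrt (Dg a e \<rho> t)"
  define K where "K = a * (a * t + e) - 2 * \<rho> * a * e"
  have X: "X > 0" "X^2 = Dg a e \<rho> t" using D by (auto simp: X_def)
  have P: "P1 a e \<rho> t > 0" "P2 a e \<rho> t > 0" using P_pos[OF a e r t] by auto
  have dX: "((\<lambda>t. sqrt (Dg a e \<rho> t)) has_real_derivative K / X) (at t)"
    using dX_lemma[OF D] by (simp add: X_def K_def)
  have dP1: "(P1 a e \<rho> has_real_derivative K / X + a) (at t)"
    unfolding P1_def by (rule derivative_eq_intros refl dX)+ simp
  have dP2: "(P2 a e \<rho> has_real_derivative K / X + a - 2 * \<rho> * a) (at t)"
    unfolding P2_def by (rule derivative_eq_intros refl dX)+ simp
  have l1: "((\<lambda>t. ln (P1 a e \<rho> t)) has_real_derivative a / X) (at t)"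
  proof -
    have "(K / X + a) * inverse (P1 a e \<rho> t) = a / X"
    proof -
      have "K + a * X = a * P1 a e \<rho> t" unfolding K_def P1_def X_def[symmetric] by (simp add: algebra_simps)
      then show ?thesis using X P by (simp add: field_simps)
    qed
    then show ?thesis using DERIV_chain2[OF DERIV_ln[OF P(1)] dP1] by (simp add: mult.commute)
  qed
  have l2: "((\<lambda>t. ln (P2 a e \<rho> t)) has_real_derivative (X - e) / (t * X)) (at t)"
  proof -
    have "(K / X + a - 2 * \<rho> * a) * inverse (P2 a e \<rho> t) = (X - e) / (t * X)"
    proof -
      have "t * (K + (a - 2 * \<rho> * a) * X) = (X - e) * P2 a e \<rho> t"
      proof -
        have "(X - e) * P2 a e \<rho> t = X^2 + X * (a * t - 2 * \<rho> * a * t) - e * (a * t + e - 2 * \<rho> * a * t)"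
          unfolding P2_def X_def[symmetric] by (simp add: power2_eq_square algebra_simps)
        then show ?thesis unfolding X(2) Dg_def K_def by (simp add: power2_eq_square algebra_simps)
      qed
      note eq = this
      have "(K / X + a - 2 * \<rho> * a) * inverse (P2 a e \<rho> t) = (K + (a - 2 * \<rho> * a) * X) / (X * P2 a e \<rho> t)"
        using X P by (simp add: field_simps)
      also have "\<dots> = t * (K + (a - 2 * \<rho> * a) * X) / (t * (X * P2 a e \<rho> t))" using t by simp
      also have "\<dots> = (X - e) * P2 a e \<rho> t / (t * (X * P2 a e \<rho> t))" unfolding eq ..
      also have "\<dots> = (X - e) / (t * X)" using P by simp
      finally show ?thesis .
    qed
    then show ?thesis using DERIV_chain2[OF DERIV_ln[OF P(2)] dP2] by (simp add: mult.commute)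
  qed
  have dG: "((\<lambda>t. - Gb a e \<rho> t) has_real_derivative gg a e \<rho> t) (at t)" by (rule Gb_deriv[OF D])
  have "(Hf a e \<rho> has_real_derivative (1 / t) * (- Gb a e \<rho> t) + gg a e \<rho> t * ln t + (1 / t - (a / X) / 2 - ((X - e) / (t * X)) / 2)) (at t)"
    unfolding Hf_def
    by (intro DERIV_add DERIV_mult DERIV_diff DERIV_cdivide dG l1 l2 DERIV_ln_divide t)
  moreover have "(1 / t) * (- Gb a e \<rho> t) + gg a e \<rho> t * ln t + (1 / t - (a / X) / 2 - ((X - e) / (t * X)) / 2) = ln t * gg a e \<rho> t"
  proof -
    have "(1 / t) * (- Gb a e \<rho> t) + (1 / t - (a / X) / 2 - ((X - e) / (t * X)) / 2) = 0"
      unfolding Gb_def X_def[symmetric] using X t by (simp add: field_simps)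
    then show ?thesis by simp
  qed
  ultimately show ?thesis by metis
qed

lemma log_int:
  assumes a: "a > 0" and e: "e > 0" and r: "0 \<le> \<rho>" "\<rho> < 1"
  shows "(\<integral>\<^sup>+t. ennreal (ln t * gg a e \<rho> t) * indicator {1..} t \<partial>lborel)
     = ennreal ((- ln (2 * a) / 2 - ln (2 * a - 2 * \<rho> * a) / 2) - Hf a e \<rho> 1)"
proof (rule nn_integral_FTC_atLeast)
  show "(\<lambda>t. ln t * gg a e \<rho> t) \<in> borel_measurable borel" unfolding gg_def Dg_def by measurable
  show "(Hf a e \<rho> has_real_derivative ln x * gg a e \<rho> x) (at x)" if "1 \<le> x" for x
    using Hf_deriv[OF a e r] that by simp
  show "0 \<le> ln x * gg a e \<rho> x" if "1 \<le> x" for x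
    using gg_nonneg[OF a e r, of x] that by simp
  show "(Hf a e \<rho> \<longlongrightarrow> - ln (2 * a) / 2 - ln (2 * a - 2 * \<rho> * a) / 2) at_top"
    unfolding Hf_def Gb_def P1_def P2_def Dg_def using a e r by real_asymp
qed

lemma log_value:
  assumes a: "a > 0" and e: "e > 0" and r: "0 \<le> \<rho>" "\<rho> < 1"
  defines "S \<equiv> sqrt ((a + e)^2 - 4 * \<rho> * a * e)"
  shows "(- ln (2 * a) / 2 - ln (2 * a - 2 * \<rho> * a) / 2) - Hf a e \<rho> 1 = ln ((a + e + S) / (2 * a))"
proof -
  have D1: "Dg a e \<rho> 1 = (a + e)^2 - 4 * \<rho> * a * e" by (simp add: Dg_def)
  have Dp: "(a + e)^2 - 4 * \<rho> * a * e > 0" using Dg_pos[OF a e r, of 1] D1 by simp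
  have S: "S \<ge> 0" "S^2 = (a + e)^2 - 4 * \<rho> * a * e" using Dp by (auto simp: S_def)
  have p1: "P1 a e \<rho> 1 = S + a + e - 2 * \<rho> * e" by (simp add: P1_def D1 S_def)
  have p2: "P2 a e \<rho> 1 = S + a + e - 2 * \<rho> * a" by (simp add: P2_def D1 S_def)
  have pp: "P1 a e \<rho> 1 > 0" "P2 a e \<rho> 1 > 0" using P_pos[OF a e r, of 1] by auto
  have prod: "(S + a + e - 2 * \<rho> * e) * (S + a + e - 2 * \<rho> * a) = (1 - \<rho>) * (a + e + S)^2"
    using S(2) by algebra
  have Hf1: "Hf a e \<rho> 1 = - (ln (P1 a e \<rho> 1) + ln (P2 a e \<rho> 1)) / 2" by (simp add: Hf_def)
  have "ln (P1 a e \<rho> 1) + ln (P2 a e \<rho> 1) = ln ((1 - \<rho>) * (a + e + S)^2)"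
  proof -
    have "ln (P1 a e \<rho> 1) + ln (P2 a e \<rho> 1) = ln (P1 a e \<rho> 1 * P2 a e \<rho> 1)"
      using pp by (simp add: ln_mult)
    then show ?thesis unfolding p1 p2 prod .
  qed
  moreover have "ln (2 * a) + ln (2 * a - 2 * \<rho> * a) = ln ((1 - \<rho>) * (2 * a)^2)"
  proof -
    have "2 * a - 2 * \<rho> * a > 0" using a r by (simp add: algebra_simps)
    then have "ln (2 * a) + ln (2 * a - 2 * \<rho> * a) = ln ((2 * a) * (2 * a - 2 * \<rho> * a))"
      using a by (simp add: ln_mult)
    also have "(2 * a) * (2 * a - 2 * \<rho> * a) = (1 - \<rho>) * (2 * a)^2" by (simp add: power2_eq_square algebra_simps)
    finally show ?thesis .
  qed
  moreover have "ln ((1 - \<rho>) * (a + e + S)^2) - ln ((1 - \<rho>) * (2 * a)^2) = 2 * ln ((a + e + S) / (2 * a))"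
  proof -
    have pos: "a + e + S > 0" "1 - \<rho> > 0" using a e S r by auto
    have "ln ((1 - \<rho>) * (a + e + S)^2) - ln ((1 - \<rho>) * (2 * a)^2) = ln (((a + e + S) / (2 * a))^2)"
    proof -
      have x: "(a + e + S)^2 > 0" "(2 * a)^2 > 0" using pos a by auto
      have "ln ((1 - \<rho>) * (a + e + S)^2) = ln (1 - \<rho>) + ln ((a + e + S)^2)" using pos x by (simp add: ln_mult)
      moreover have "ln ((1 - \<rho>) * (2 * a)^2) = ln (1 - \<rho>) + ln ((2 * a)^2)" using pos x by (simp add: ln_mult)
      moreover have "ln ((a + e + S)^2) - ln ((2 * a)^2) = ln ((a + e + S)^2 / (2 * a)^2)" using x by (simp add: ln_div)
      ultimately show ?thesis by (simp add: power_divide)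
    qed
    also have "\<dots> = 2 * ln ((a + e + S) / (2 * a))" using pos a by (simp add: ln_realpow)
    finally show ?thesis .
  qed
  ultimately show ?thesis unfolding Hf1 by (simp add: field_simps)
qed

lemma lim_log:
  fixes x y b :: real assumes "x > y" "y > 0" "b > 1"
  shows "((\<lambda>n. log b (1 + x * real n) - log b (1 + y * real n)) \<longlongrightarrow> log b (x / y)) sequentially"
proof -
  have "((\<lambda>n. ln (1 + x * real n) / ln b - ln (1 + y * real n) / ln b) \<longlongrightarrow> ln x * inverse (ln b) - ln y * inverse (ln b)) sequentially"
    using assms by real_asymp
  moreover have "log b (x / y) = ln x * inverse (ln b) - ln y * inverse (ln b)"
  proof -
    have l: "ln (x / y) = ln x - ln y" using assms by (intro ln_divide_pos) auto
    show ?thesis unfolding log_def l by (simp add: divide_inverse algebra_simps)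
  qed
  ultimately show ?thesis by (simp add: log_def)
qed

lemma gden_gg:
  assumes "gM > 0" "gE > 0"
  shows "gden gM gE \<rho> t = gg (1 / gM) (1 / gE) \<rho> t"
proof -
  have "Dq gM gE \<rho> t = Dg (1 / gM) (1 / gE) \<rho> t" unfolding Dq_def Dg_def by (simp add: field_simps)
  then show ?thesis unfolding gden_def gg_def using assms by (simp add: field_simps)
qed

lemma AE_snd_pos:
  assumes gM: "gM > 0" and gE: "gE > 0" and r: "\<rho> < 1"
  shows "AE h in gains_distr gM gE \<rho>. 0 < snd h"
proof -
  have null: "AE h in (lborel :: (real \<times> real) measure). snd h \<noteq> 0"
  proof (rule AE_I')
    show "{h \<in> space lborel. \<not> snd h \<noteq> 0} \<in> null_sets (lborel :: (real \<times> real) measure)"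
    proof -
      have eq: "{h \<in> space lborel. \<not> snd h \<noteq> 0} = (UNIV :: real set) \<times> {0 :: real}" by auto
      have "emeasure (lborel \<Otimes>\<^sub>M lborel) ((UNIV :: real set) \<times> {0 :: real}) = emeasure lborel (UNIV :: real set) * emeasure lborel {0 :: real}"
        by (rule lborel.emeasure_pair_measure_Times) auto
      then have "emeasure (lborel :: (real \<times> real) measure) ((UNIV :: real set) \<times> {0 :: real}) = 0"
        unfolding lborel_prod by simp
      moreover have "(UNIV :: real set) \<times> {0 :: real} \<in> sets (borel \<Otimes>\<^sub>M (borel :: real measure))"
        by (intro pair_measureI) auto
      then have "(UNIV :: real set) \<times> {0 :: real} \<in> sets (borel :: (real \<times> real) measure)"
        unfolding borel_prod .
      ultimately show ?thesis unfolding eq by (auto simp: null_sets_def borel_prod)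
    qed
  qed simp
  show ?thesis
    unfolding gains_distr_def
  proof (subst AE_density)
    show "(\<lambda>h. ennreal (rayleigh_density gM gE \<rho> h)) \<in> borel_measurable lborel"
      using rayleigh_measurable[OF gM gE r] by simp
    show "AE x in lborel. 0 < ennreal (rayleigh_density gM gE \<rho> x) \<longrightarrow> 0 < snd x"
      using null by eventually_elim (auto simp: rayleigh_density_def)
  qed
qed

lemma total_mass:
  assumes gM: "gM > 0" and gE: "gE > 0" and r: "0 \<le> \<rho>" "\<rho> < 1"
  shows "(\<integral>\<^sup>+h. 1 \<partial>gains_distr gM gE \<rho>) = 1"
proof -
  have "(\<integral>\<^sup>+h. 1 \<partial>gains_distr gM gE \<rho>) = (\<integral>\<^sup>+t. 1 * ennreal (gden gM gE \<rho> t) * indicator {0..} t \<partial>lborel)"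
    by (rule main_reduction[OF gM gE r]) auto
  also have "\<dots> = (\<integral>\<^sup>+t. ennreal (gg (1/gM) (1/gE) \<rho> t) * indicator {0..} t \<partial>lborel)"
    by (simp add: gden_gg[OF gM gE])
  also have "\<dots> = 1" by (rule gg_int) (use gM gE r in auto)
  finally show ?thesis .
qed

lemma value_eq:
  assumes gM: "gM > 0" and gE: "gE > 0" and r: "0 \<le> \<rho>" "\<rho> < 1" and b: "b > 1"
  defines "\<kappa> \<equiv> gM / gE"
  defines "a \<equiv> 1 / gM" and "e \<equiv> 1 / gE"
  shows "ln ((a + e + sqrt ((a + e)^2 - 4 * \<rho> * a * e)) / (2 * a)) / ln b
     = log b (1 + \<kappa>) + log b (1/2 + sqrt (1/4 - \<rho> * \<kappa> / (1 + \<kappa>)^2))"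
proof -
  have k: "\<kappa> > 0" unfolding \<kappa>_def using gM gE by simp
  have ke: "\<kappa> = e / a" unfolding \<kappa>_def a_def e_def using gM gE by simp
  have a: "a > 0" "e > 0" unfolding a_def e_def using gM gE by auto
  have q: "1/4 - \<rho> * \<kappa> / (1 + \<kappa>)^2 \<ge> 0"
  proof -
    have "(1 + \<kappa>)^2 - 4 * \<kappa> = (1 - \<kappa>)^2" by (simp add: power2_eq_square algebra_simps)
    then have "4 * \<kappa> \<le> (1 + \<kappa>)^2" using zero_le_power2[of "1 - \<kappa>"] by linarith
    moreover have "\<rho> * \<kappa> \<le> \<kappa>" using r k by (simp add: mult_left_le_one_le)
    ultimately have "4 * (\<rho> * \<kappa>) \<le> (1 + \<kappa>)^2" by linarith
    moreover have "(1 + \<kappa>)^2 > 0" using k by simp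
    ultimately have "\<rho> * \<kappa> / (1 + \<kappa>)^2 \<le> 1/4" by (simp add: pos_divide_le_eq)
    then show ?thesis by linarith
  qed
  have pos: "1/2 + sqrt (1/4 - \<rho> * \<kappa> / (1 + \<kappa>)^2) > 0" using real_sqrt_ge_zero[OF q] by linarith
  have main: "(1 + \<kappa>) * (1/2 + sqrt (1/4 - \<rho> * \<kappa> / (1 + \<kappa>)^2)) = (a + e + sqrt ((a + e)^2 - 4 * \<rho> * a * e)) / (2 * a)"
  proof -
    have s1: "(1 + \<kappa>) * sqrt (1/4 - \<rho> * \<kappa> / (1 + \<kappa>)^2) = sqrt ((1 + \<kappa>)^2 * (1/4 - \<rho> * \<kappa> / (1 + \<kappa>)^2))"
      using k by (simp add: real_sqrt_mult)
    have s2: "sqrt ((a + e)^2 - 4 * \<rho> * a * e) / (2 * a) = sqrt (((a + e)^2 - 4 * \<rho> * a * e) / (2 * a)^2)"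
    proof -
      have "sqrt ((2 * a)^2) = 2 * a" by (subst real_sqrt_abs) (use a in simp)
      then show ?thesis by (simp only: real_sqrt_divide)
    qed
    have s3: "(1 + \<kappa>)^2 * (1/4 - \<rho> * \<kappa> / (1 + \<kappa>)^2) = ((a + e)^2 - 4 * \<rho> * a * e) / (2 * a)^2"
    proof -
      have l: "(1 + \<kappa>)^2 * (1/4 - \<rho> * \<kappa> / (1 + \<kappa>)^2) = (1 + \<kappa>)^2 / 4 - \<rho> * \<kappa>"
        using k by (simp add: field_simps)
      have r: "((a + e)^2 - 4 * \<rho> * a * e) / (2 * a)^2 = (1 + e / a)^2 / 4 - \<rho> * (e / a)"
        using a by (simp add: field_simps power2_eq_square)
      show ?thesis unfolding l r by (simp only: ke)
    qed
    have "(1 + \<kappa>) * (1/2 + sqrt (1/4 - \<rho> * \<kappa> / (1 + \<kappa>)^2)) = (1 + \<kappa>) / 2 + (1 + \<kappa>) * sqrt (1/4 - \<rho> * \<kappa> / (1 + \<kappa>)^2)"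
      by (simp add: algebra_simps)
    also have "\<dots> = (a + e) / (2 * a) + sqrt ((a + e)^2 - 4 * \<rho> * a * e) / (2 * a)"
    proof -
      have h: "(1 + \<kappa>) / 2 = (a + e) / (2 * a)" unfolding ke using a by (simp add: field_simps)
      show ?thesis unfolding s1 s3 s2 h ..
    qed
    finally show ?thesis by (simp add: add_divide_distrib)
  qed
  have "log b (1 + \<kappa>) + log b (1/2 + sqrt (1/4 - \<rho> * \<kappa> / (1 + \<kappa>)^2)) = log b ((1 + \<kappa>) * (1/2 + sqrt (1/4 - \<rho> * \<kappa> / (1 + \<kappa>)^2)))"
    using k pos b by (simp add: log_mult)
  also have "\<dots> = ln ((a + e + sqrt ((a + e)^2 - 4 * \<rho> * a * e)) / (2 * a)) / ln b"
    unfolding main log_def ..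
  finally show ?thesis ..
qed

lemma L_value:
  fixes b gM gE \<rho> :: real
  assumes b: "b > 1" and gM: "gM > 0" and gE: "gE > 0" and r: "0 \<le> \<rho>" "\<rho> < 1"
  defines "\<kappa> \<equiv> gM / gE"
  shows "(\<integral>\<^sup>+ h. ennreal (log b (fst h / snd h) * indicator {h. fst h > snd h} h) \<partial>gains_distr gM gE \<rho>)
         = ennreal (log b (1 + \<kappa>) + log b (1/2 + sqrt (1/4 - \<rho> * \<kappa> / (1 + \<kappa>)^2)))"
proof -
  define a where "a = 1 / gM"
  define e where "e = 1 / gE"
  have ae: "a > 0" "e > 0" using gM gE by (auto simp: a_def e_def)
  have lb: "ln b > 0" using b by simp
  have "(\<integral>\<^sup>+ h. ennreal (log b (fst h / snd h) * indicator {h. fst h > snd h} h) \<partial>gains_distr gM gE \<rho>)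
     = (\<integral>\<^sup>+t. ennreal (log b t * indicator {1<..} t) * ennreal (gden gM gE \<rho> t) * indicator {0..} t \<partial>lborel)"
  proof (rule main_reduction[OF gM gE r])
    have "(\<lambda>h. ennreal (log b (fst h / snd h) * indicator {h. fst h > snd h} h)) \<in> borel_measurable (borel \<Otimes>\<^sub>M borel)"
      by measurable
    then show "(\<lambda>h. ennreal (log b (fst h / snd h) * indicator {h. fst h > snd h} h)) \<in> borel_measurable borel"
      unfolding borel_prod .
    show "(\<lambda>t. ennreal (log b t * indicator {1<..} t)) \<in> borel_measurable borel" by measurable
    show "ennreal (log b (fst (t * w, w) / snd (t * w, w)) * indicator {h. fst h > snd h} (t * w, w))
          = ennreal (log b t * indicator {1<..} t)" if "w > 0" for t w
      using that by (simp add: indicator_def)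
  qed
  also have "\<dots> = (\<integral>\<^sup>+t. ennreal (1 / ln b) * (ennreal (ln t * gg a e \<rho> t) * indicator {1..} t) \<partial>lborel)"
  proof (intro nn_integral_cong)
    fix t :: real
    show "ennreal (log b t * indicator {1<..} t) * ennreal (gden gM gE \<rho> t) * indicator {0..} t
        = ennreal (1 / ln b) * (ennreal (ln t * gg a e \<rho> t) * indicator {1..} t)"
    proof (cases "t > 1")
      case True
      have g0: "gg a e \<rho> t \<ge> 0" using gg_nonneg[OF ae r, of t] True by simp
      have l0: "ln t \<ge> 0" using True by simp
      have "ennreal (log b t) * ennreal (gg a e \<rho> t) = ennreal (1 / ln b) * ennreal (ln t * gg a e \<rho> t)"
        using g0 l0 lb by (simp add: ennreal_mult[symmetric] log_def)
      then show ?thesis using True by (simp add: gden_gg[OF gM gE] a_def e_def)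
    next
      case False
      then show ?thesis by (cases "t = 1") (auto simp: indicator_def)
    qed
  qed
  also have "\<dots> = ennreal (1 / ln b) * (\<integral>\<^sup>+t. ennreal (ln t * gg a e \<rho> t) * indicator {1..} t \<partial>lborel)"
    by (rule nn_integral_cmult) (unfold gg_def Dg_def, measurable)
  also have "\<dots> = ennreal (1 / ln b) * ennreal (ln ((a + e + sqrt ((a + e)^2 - 4 * \<rho> * a * e)) / (2 * a)))"
    by (simp only: log_int[OF ae r] log_value[OF ae r])
  also have "\<dots> = ennreal (ln ((a + e + sqrt ((a + e)^2 - 4 * \<rho> * a * e)) / (2 * a)) / ln b)"
    using lb by (simp add: ennreal_mult'[symmetric])
  also have "\<dots> = ennreal (log b (1 + \<kappa>) + log b (1/2 + sqrt (1/4 - \<rho> * \<kappa> / (1 + \<kappa>)^2)))"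
    using value_eq[OF gM gE r b] unfolding a_def e_def \<kappa>_def by simp
  finally show ?thesis .
qed

lemma log_gain_le:
  fixes x y p b :: real
  assumes "y < x" "0 < y" "0 \<le> p" "1 < b"
  shows "log b (1 + x * p) - log b (1 + y * p) \<le> log b (x / y)"
proof -
  have p1: "1 + x * p > 0" "1 + y * p > 0" using assms by (auto intro: add_pos_nonneg)
  have "log b (1 + x * p) - log b (1 + y * p) = log b ((1 + x * p) / (1 + y * p))"
    using p1 assms by (simp add: log_divide)
  also have "\<dots> \<le> log b (x / y)"
  proof (subst log_le_cancel_iff)
    show "(1 + x * p) / (1 + y * p) \<le> x / y"
      using p1 assms by (simp add: divide_simps) (simp add: algebra_simps)
  qed (use assms p1 in auto)
  finally show ?thesis .
qed

lemma log_gain_mono: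
  fixes x y b :: real and m n :: nat
  assumes "y < x" "0 < y" "1 < b" "m \<le> n"
  shows "log b (1 + x * real m) - log b (1 + y * real m) \<le> log b (1 + x * real n) - log b (1 + y * real n)"
proof -
  have p: "1 + x * real m > 0" "1 + y * real m > 0" "1 + x * real n > 0" "1 + y * real n > 0"
    using assms by (auto intro: add_pos_nonneg)
  have "log b (1 + x * real m) - log b (1 + y * real m) = log b ((1 + x * real m) / (1 + y * real m))"
    using p assms by (simp add: log_divide)
  also have "\<dots> \<le> log b ((1 + x * real n) / (1 + y * real n))"
  proof (subst log_le_cancel_iff)
    have "(x - y) * (real n - real m) \<ge> 0" using assms by simp
    then show "(1 + x * real m) / (1 + y * real m) \<le> (1 + x * real n) / (1 + y * real n)"
      using p by (simp add: divide_simps) (simp add: algebra_simps)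
  qed (use assms p in auto)
  also have "\<dots> = log b (1 + x * real n) - log b (1 + y * real n)"
    using p assms by (simp add: log_divide)
  finally show ?thesis .
qed

lemma cap_limit:
  fixes b gM gE \<rho> :: real
  assumes b: "b > 1" and gM: "gM > 0" and gE: "gE > 0" and r: "0 \<le> \<rho>" "\<rho> < 1"
  shows "((\<lambda>Pbar. secrecy_capacity b gM gE \<rho> Pbar) \<longlongrightarrow>
           (\<integral>\<^sup>+ h. ennreal (log b (fst h / snd h) * indicator {h. fst h > snd h} h) \<partial>gains_distr gM gE \<rho>)) at_top"
proof -
  define M where "M = gains_distr gM gE \<rho>"
  define Lf where "Lf h = ennreal (log b (fst h / snd h) * indicator {h. fst h > snd h} h)" for h :: "real \<times> real"
  define Q where "Q n h = ennreal ((log b (1 + fst h * real n) - log b (1 + snd h * real n)) * indicator {h. fst h > snd h} h)"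
    for n :: nat and h :: "real \<times> real"
  define L where "L = integral\<^sup>N M Lf"
  have AEp: "AE h in M. 0 < snd h" unfolding M_def by (rule AE_snd_pos[OF gM gE r(2)])
  have sM: "space M = UNIV" by (simp add: M_def gains_distr_def)
  have mass: "emeasure M (space M) = 1"
    using total_mass[OF gM gE r] unfolding M_def[symmetric] by (simp add: nn_integral_const)
  have upper: "secrecy_capacity b gM gE \<rho> Pbar \<le> L" for Pbar
    unfolding secrecy_capacity_def L_def M_def[symmetric]
  proof (rule SUP_least)
    fix P assume P: "P \<in> power_allocs gM gE \<rho> Pbar"
    then have P0: "\<And>h. 0 \<le> P h" by (auto simp: power_allocs_def)
    show "(\<integral>\<^sup>+ h. ennreal ((log b (1 + fst h * P h) - log b (1 + snd h * P h)) * indicator {h. fst h > snd h} h) \<partial>M)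
          \<le> integral\<^sup>N M Lf"
    proof (rule nn_integral_mono_AE)
      show "AE h in M. ennreal ((log b (1 + fst h * P h) - log b (1 + snd h * P h)) * indicator {h. fst h > snd h} h) \<le> Lf h"
        using AEp
      proof eventually_elim
        case (elim h)
        show ?case
        proof (cases "fst h > snd h")
          case True
          then show ?thesis unfolding Lf_def
            using log_gain_le[OF True elim P0[of h] b] by (auto intro: ennreal_leI)
        next
          case False
          then show ?thesis by (simp add: Lf_def)
        qed
      qed
    qed
  qed
  have lower: "integral\<^sup>N M (Q n) \<le> secrecy_capacity b gM gE \<rho> Pbar" if "real n \<le> Pbar" for n Pbar
  proof -
    have mem: "(\<lambda>_. real n) \<in> power_allocs gM gE \<rho> Pbar"
      unfolding power_allocs_def using that mass by (simp add: M_def[symmetric] nn_integral_const)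
    show ?thesis unfolding secrecy_capacity_def Q_def M_def
      using SUP_upper[OF mem, of "\<lambda>P. \<integral>\<^sup>+ h. ennreal ((log b (1 + fst h * P h) - log b (1 + snd h * P h)) * indicator {h. fst h > snd h} h) \<partial>gains_distr gM gE \<rho>"]
      by simp
  qed
  define f where "f n h = Q n h * indicator {h. 0 < snd h} h" for n h
  define g where "g h = Lf h * indicator {h. 0 < snd h} h" for h
  have Qf: "integral\<^sup>N M (Q n) = integral\<^sup>N M (f n)" for n
    by (rule nn_integral_cong_AE) (use AEp in \<open>auto simp: f_def\<close>)
  have Lg: "L = integral\<^sup>N M g"
    unfolding L_def by (rule nn_integral_cong_AE) (use AEp in \<open>auto simp: g_def\<close>)
  have fm: "f n \<in> borel_measurable M" for n
  proof -
    have "f n \<in> borel_measurable (borel \<Otimes>\<^sub>M borel)" unfolding f_def Q_def by measurable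
    then show ?thesis unfolding borel_prod M_def gains_distr_def by simp
  qed
  have inc: "incseq f"
  proof (rule incseq_SucI, rule le_funI)
    fix n h
    show "f n h \<le> f (Suc n) h"
    proof (cases "0 < snd h \<and> snd h < fst h")
      case True
      then show ?thesis unfolding f_def Q_def
        using log_gain_mono[of "snd h" "fst h" b n "Suc n"] b by (auto intro: ennreal_leI)
    next
      case False
      then show ?thesis unfolding f_def Q_def by (auto simp: indicator_def)
    qed
  qed
  have sup: "(SUP n. f n h) = g h" for h
  proof (cases "0 < snd h \<and> snd h < fst h")
    case True
    have "(\<lambda>n. f n h) \<longlonglongrightarrow> g h"
      unfolding f_def Q_def g_def Lf_def using True
      by (simp add: tendsto_ennrealI lim_log[OF _ _ b])
    moreover have "(\<lambda>n. f n h) \<longlonglongrightarrow> (SUP n. f n h)"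
    proof (rule LIMSEQ_SUP)
      show "incseq (\<lambda>n. f n h)" using inc unfolding incseq_def le_fun_def by blast
    qed
    ultimately show ?thesis using LIMSEQ_unique by blast
  next
    case False
    then show ?thesis unfolding f_def Q_def g_def Lf_def by (auto simp: indicator_def)
  qed
  have SUPL: "(SUP n. integral\<^sup>N M (Q n)) = L"
    unfolding Qf Lg
    using nn_integral_monotone_convergence_SUP[OF inc fm] sup by simp
  show ?thesis
    unfolding M_def[symmetric] Lf_def[symmetric] L_def[symmetric]
  proof (rule order_tendstoI)
    fix c assume "c < L"
    then obtain n where n: "c < integral\<^sup>N M (Q n)" unfolding SUPL[symmetric] less_SUP_iff by blast
    show "eventually (\<lambda>Pbar. c < secrecy_capacity b gM gE \<rho> Pbar) at_top"
      unfolding eventually_at_top_linorder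
      by (rule exI[of _ "real n"]) (use n lower in \<open>auto intro: less_le_trans\<close>)
  next
    fix c assume "L < c"
    then show "eventually (\<lambda>Pbar. secrecy_capacity b gM gE \<rho> Pbar < c) at_top"
      using upper by (intro always_eventually allI) (rule le_less_trans)
  qed
qed

theorem theorem2:
  fixes b gM gE \<rho> :: real
  assumes "b > 1" and "gM > 0" and "gE > 0" and "0 \<le> \<rho>" and "\<rho> < 1"
  defines "\<kappa> \<equiv> gM / gE"
  shows "((\<lambda>Pbar. secrecy_capacity b gM gE \<rho> Pbar) \<longlongrightarrow>
            ennreal (log b (1 + \<kappa>) + log b (1/2 + sqrt (1/4 - \<rho> * \<kappa> / (1 + \<kappa>)^2))))
           at_top \<and>
         (\<integral>\<^sup>+ h. ennreal (log b (fst h / snd h) * indicator {h. fst h > snd h} h)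
            \<partial>gains_distr gM gE \<rho>)
         = ennreal (log b (1 + \<kappa>) + log b (1/2 + sqrt (1/4 - \<rho> * \<kappa> / (1 + \<kappa>)^2)))"
proof -
  have L: "(\<integral>\<^sup>+ h. ennreal (log b (fst h / snd h) * indicator {h. fst h > snd h} h)
            \<partial>gains_distr gM gE \<rho>)
         = ennreal (log b (1 + \<kappa>) + log b (1/2 + sqrt (1/4 - \<rho> * \<kappa> / (1 + \<kappa>)^2)))"
    unfolding \<kappa>_def by (rule L_value) (use assms in auto)
  have T: "((\<lambda>Pbar. secrecy_capacity b gM gE \<rho> Pbar) \<longlongrightarrow>
           (\<integral>\<^sup>+ h. ennreal (log b (fst h / snd h) * indicator {h. fst h > snd h} h) \<partial>gains_distr gM gE \<rho>)) at_top"
    by (rule cap_limit) (use assms in auto)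
  show ?thesis using T L by simp
qed

end
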